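(* Let $f:\mathbb{R}^n\to\mathbb{R}^n$ be smooth, $N\ge2$, and $A$ a real $n\times n$ matrix, and consider the unidirectional ring network $$\dot{x}_i=f(x_i)+A(x_{i-1}-x_i),\qquad i=1,\dots,N,$$ with indices modulo $N$ (so $x_0=x_N$). Suppose that there is $\lambda>0$ with $(J_f(z))_s+A_s\preceq-\lambda I$ for all $z\in\mathbb{R}^n$, that $A_s\succ0$, and that $4A_s-AA_s^{-1}A^T\succeq0$. Then for every initial condition, $\|x_i(t)-x_j(t)\|\to0$ exponentially as $t\to\infty$ for all $i,j$ (complete synchronization).
   Context: $J_f(z)=\frac{\partial f}{\partial z}(z)$ is the Jacobian of $f$. For a square matrix $M$, $M_s=\tfrac12(M+M^T)$. For symmetric matrices, $M\succ0$ ($\succeq0$) means positive definite (semidefinite), and $M\preceq N$ means $N-M\succeq0$. *)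

theory Defs
  imports "HOL-Analysis.Analysis"
begin

fun Ck_map :: "nat \<Rightarrow> ('a::real_normed_vector \<Rightarrow> 'a) \<Rightarrow> bool" where
  "Ck_map 0 f = continuous_on UNIV f"
| "Ck_map (Suc k) f =
     (f differentiable_on UNIV \<and> (\<forall>v. Ck_map k (\<lambda>z. frechet_derivative f (at z) v)))"

definition smooth_map :: "('a::real_normed_vector \<Rightarrow> 'a) \<Rightarrow> bool" where
  "smooth_map f \<longleftrightarrow> (\<forall>k. Ck_map k f)"

definition jacobian :: "(real^'n \<Rightarrow> real^'n) \<Rightarrow> real^'n \<Rightarrow> real^'n^'n" where
  "jacobian f z = matrix (frechet_derivative f (at z))"

definition sym_part :: "real^'n^'n \<Rightarrow> real^'n^'n" where
  "sym_part M = (1/2) *\<^sub>R (M + transpose M)"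

definition psd :: "real^'n^'n \<Rightarrow> bool" where
  "psd M \<longleftrightarrow> (\<forall>v. 0 \<le> v \<bullet> (M *v v))"

definition pd :: "real^'n^'n \<Rightarrow> bool" where
  "pd M \<longleftrightarrow> (\<forall>v. v \<noteq> 0 \<longrightarrow> 0 < v \<bullet> (M *v v))"

definition loewner_le :: "real^'n^'n \<Rightarrow> real^'n^'n \<Rightarrow> bool" where
  "loewner_le M N \<longleftrightarrow> psd (N - M)"

end

theory Submission imports Defs begin

lemma inv_right:
  fixes B :: "real^'n^'n"
  assumes "pd B"
  shows "B ** matrix_inv B = mat 1"
proof -
  have "\<forall>x. B *v x = 0 \<longrightarrow> x = 0"
    using assms unfolding pd_def by (metis inner_zero_right less_irrefl)
  then have "\<exists>C. C ** B = mat 1" using matrix_left_invertible_ker by blast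
  then have "invertible B" using invertible_left_inverse by blast
  then show ?thesis unfolding invertible_def matrix_inv_def by (metis (mono_tags, lifting) someI_ex)
qed

lemma transpose_inner: "(u::real^'n) \<bullet> (transpose M *v v) = v \<bullet> (M *v u)"
  by (metis dot_lmul_matrix inner_commute transpose_matrix_vector)

lemma sym_part_quad: "(v::real^'n) \<bullet> (sym_part M *v v) = v \<bullet> (M *v v)"
proof -
  have "sym_part M *v v = (1/2) *\<^sub>R (M *v v + transpose M *v v)"
    unfolding sym_part_def by (simp add: scaleR_matrix_vector_assoc[symmetric] matrix_vector_mult_add_rdistrib
       del: transpose_matrix_vector)
  then show ?thesis by (simp add: inner_add_right transpose_inner del: transpose_matrix_vector)
qed

lemma sym_part_sym: "(u::real^'n) \<bullet> (sym_part M *v v) = v \<bullet> (sym_part M *v u)"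
proof -
  have "sym_part M *v v = (1/2) *\<^sub>R (M *v v + transpose M *v v)"
    unfolding sym_part_def by (simp add: scaleR_matrix_vector_assoc[symmetric] matrix_vector_mult_add_rdistrib
       del: transpose_matrix_vector)
  moreover have "sym_part M *v u = (1/2) *\<^sub>R (M *v u + transpose M *v u)"
    unfolding sym_part_def by (simp add: scaleR_matrix_vector_assoc[symmetric] matrix_vector_mult_add_rdistrib
       del: transpose_matrix_vector)
  ultimately show ?thesis by (simp add: inner_add_right transpose_inner del: transpose_matrix_vector)
qed

lemma quad_bound:
  fixes A :: "real^'n^'n"
  assumes pd: "pd (sym_part A)"
    and cond: "psd (4 *\<^sub>R sym_part A - A ** matrix_inv (sym_part A) ** transpose A)"
  shows "v \<bullet> (A *v w) \<le> v \<bullet> (sym_part A *v v) + w \<bullet> (sym_part A *v w)"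
proof -
  define B where "B = sym_part A"
  define z where "z = matrix_inv B *v (transpose A *v v)"
  have Bz: "B *v z = transpose A *v v"
    unfolding z_def using inv_right[OF pd] by (simp add: matrix_vector_mul_assoc matrix_mul_assoc B_def del: transpose_matrix_vector)
  have psdB: "0 \<le> u \<bullet> (B *v u)" for u
    using pd unfolding pd_def B_def by (cases "u = 0") (auto intro: less_imp_le)
  have c: "0 \<le> v \<bullet> ((4 *\<^sub>R B - A ** matrix_inv B ** transpose A) *v v)"
    using cond unfolding psd_def B_def by blast
  have c2: "v \<bullet> ((4 *\<^sub>R B - A ** matrix_inv B ** transpose A) *v v)
      = 4 * (v \<bullet> (B *v v)) - z \<bullet> (B *v z)"
  proof -
    have "(A ** matrix_inv B ** transpose A) *v v = A *v z"
      unfolding z_def by (simp add: matrix_vector_mul_assoc matrix_mul_assoc del: transpose_matrix_vector)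
    moreover have "v \<bullet> (A *v z) = z \<bullet> (B *v z)"
      using Bz transpose_inner[of z A v] by simp
    ultimately show ?thesis
      by (simp add: matrix_vector_mult_diff_rdistrib scaleR_matrix_vector_assoc[symmetric] inner_diff_right
          del: transpose_matrix_vector)
  qed
  define y where "y = w - (1/2) *\<^sub>R z"
  have "0 \<le> y \<bullet> (B *v y)" by (rule psdB)
  also have "y \<bullet> (B *v y) = w \<bullet> (B *v w) - (1/2) * (w \<bullet> (B *v z)) - (1/2) * (z \<bullet> (B *v w))
        + (1/4) * (z \<bullet> (B *v z))"
    unfolding y_def by (simp add: matrix_vector_mult_diff_distrib matrix_vector_mult_scaleR
        inner_diff_left inner_diff_right algebra_simps del: transpose_matrix_vector)
  also have "w \<bullet> (B *v z) = v \<bullet> (A *v w)" using Bz transpose_inner[of w A v] by simp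
  also have "z \<bullet> (B *v w) = v \<bullet> (A *v w)" using Bz transpose_inner[of w A v] sym_part_sym[of z A w]
    unfolding B_def by simp
  finally show ?thesis using c c2 unfolding B_def by linarith
qed

lemma neg_mv: "(- M) *v (v::real^'n) = - (M *v v)"
  by (metis diff_0 matrix_vector_mult_0 matrix_vector_mult_diff_rdistrib)

lemma jac_deriv:
  fixes f :: "real^'n \<Rightarrow> real^'n"
  assumes "smooth_map f"
  shows "(f has_derivative (\<lambda>h. Defs.jacobian f z *v h)) (at z)"
proof -
  have "Ck_map (Suc 0) f" using assms unfolding smooth_map_def by blast
  then have "f differentiable (at z)" by (auto simp: differentiable_on_def)
  then show ?thesis
    using jacobian_works[of f "at z"]
    by (simp add: Defs.jacobian_def Cartesian_Euclidean_Space.jacobian_def)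
qed

lemma f_bound:
  fixes f :: "real^'n \<Rightarrow> real^'n" and A :: "real^'n^'n"
  assumes smooth: "smooth_map f"
    and contr: "\<forall>z. loewner_le (sym_part (Defs.jacobian f z) + sym_part A) (- lam *\<^sub>R mat 1)"
  shows "(u-w) \<bullet> (f u - f w) \<le> - lam * ((u-w) \<bullet> (u-w)) - (u-w) \<bullet> (sym_part A *v (u-w))"
proof -
  define d where "d = u - w"
  define J where "J z = Defs.jacobian f z" for z
  have pt: "d \<bullet> (J z *v d) \<le> - lam * (d \<bullet> d) - d \<bullet> (sym_part A *v d)" for z
  proof -
    have "0 \<le> d \<bullet> ((- lam *\<^sub>R mat 1 - (sym_part (J z) + sym_part A)) *v d)"
      using contr unfolding loewner_le_def psd_def J_def by blast
    also have "\<dots> = - lam * (d \<bullet> d) - d \<bullet> (sym_part (J z) *v d) - d \<bullet> (sym_part A *v d)"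
      by (simp add: matrix_vector_mult_diff_rdistrib matrix_vector_mult_add_rdistrib
          scaleR_matrix_vector_assoc[symmetric] inner_diff_right inner_add_right neg_mv
          del: transpose_matrix_vector)
    finally show ?thesis using sym_part_quad[of d "J z"] by linarith
  qed
  define h where "h s = d \<bullet> f (w + s *\<^sub>R d)" for s
  have der: "DERIV h s :> d \<bullet> (J (w + s *\<^sub>R d) *v d)" for s
  proof -
    have l: "((\<lambda>s. w + s *\<^sub>R d) has_derivative (\<lambda>h. h *\<^sub>R d)) (at s)"
      by (auto intro!: derivative_eq_intros)
    have "((\<lambda>s. f (w + s *\<^sub>R d)) has_derivative (\<lambda>h. J (w + s *\<^sub>R d) *v (h *\<^sub>R d))) (at s)"
      using has_derivative_compose[OF l jac_deriv[OF smooth]] unfolding J_def .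
    then have "(h has_derivative (\<lambda>x. d \<bullet> (J (w + s *\<^sub>R d) *v (x *\<^sub>R d)))) (at s)"
      unfolding h_def by (rule has_derivative_inner_right)
    then show ?thesis
      by (simp add: has_field_derivative_def matrix_scaleR_vector_ac scaleR_matrix_vector_assoc[symmetric]
          mult.commute[of _ "d \<bullet> _"])
  qed
  obtain s where "h 1 - h 0 = (1 - 0) * (d \<bullet> (J (w + s *\<^sub>R d) *v d))"
    using MVT2[of 0 1 h "\<lambda>s. d \<bullet> (J (w + s *\<^sub>R d) *v d)"] der by auto
  then have "d \<bullet> (f u - f w) = d \<bullet> (J (w + s *\<^sub>R d) *v d)"
    unfolding h_def d_def by (simp add: inner_diff_right)
  then show ?thesis using pt unfolding d_def by simp
qed

lemma pred_eq:
  fixes N :: nat assumes "i < N" shows "(i + N - 1) mod N = (if i = 0 then N - 1 else i - 1)"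
proof (cases "i = 0")
  case True then show ?thesis using assms by simp
next
  case False
  then have "i + N - 1 = (i - 1) + N" by simp
  then have "(i + N - 1) mod N = (i - 1) mod N" by simp
  then show ?thesis using False assms by simp
qed

lemma succ_eq:
  fixes N :: nat assumes "i < N" shows "(i + 1) mod N = (if i = N - 1 then 0 else i + 1)"
proof (cases "i = N - 1")
  case True
  then have "i + 1 = N" using assms by simp
  then show ?thesis using True by simp
next
  case False then show ?thesis using assms by simp
qed

lemma ps1: fixes N :: nat assumes "a < N" shows "((a + N - 1) mod N + 1) mod N = a"
proof -
  have "(a + N - 1) mod N < N" using assms by simp
  then show ?thesis using assms pred_eq[OF assms] succ_eq[of "(a + N - 1) mod N" N]
    by (auto split: if_splits)
qed

lemma ps2: fixes N :: nat assumes "b < N" shows "((b + 1) mod N + N - 1) mod N = b"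
proof -
  have "(b + 1) mod N < N" using assms by simp
  then show ?thesis using assms succ_eq[OF assms] pred_eq[of "(b + 1) mod N" N]
    by (auto split: if_splits)
qed

lemma sum_pred:
  fixes q :: "nat \<Rightarrow> real"
  shows "(\<Sum>i<N. q ((i + N - 1) mod N)) = (\<Sum>i<N. q i)"
proof (rule sum.reindex_bij_witness[of _ "\<lambda>i. (i + 1) mod N" "\<lambda>i. (i + N - 1) mod N"])
qed (auto simp del: One_nat_def simp: ps1 ps2)

lemma ring_sum:
  fixes A B :: "real^'n^'n" and e g :: "nat \<Rightarrow> real^'n"
  assumes hg: "\<And>i. i < N \<Longrightarrow> e i \<bullet> g i \<le> - lam * (e i \<bullet> e i) - e i \<bullet> (B *v e i)"
    and quad: "\<And>v w. v \<bullet> (A *v w) \<le> v \<bullet> (B *v v) + w \<bullet> (B *v w)"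
    and BA: "\<And>v. v \<bullet> (B *v v) = v \<bullet> (A *v v)"
  shows "(\<Sum>i<N. e i \<bullet> (g i + A *v (e ((i + N - 1) mod N) - e i))) \<le> - lam * (\<Sum>i<N. e i \<bullet> e i)"
proof -
  have "(\<Sum>i<N. e i \<bullet> (g i + A *v (e ((i + N - 1) mod N) - e i)))
      = (\<Sum>i<N. e i \<bullet> g i + e i \<bullet> (A *v e ((i + N - 1) mod N)) - e i \<bullet> (B *v e i))"
    by (intro sum.cong refl) (simp add: inner_add_right inner_diff_right matrix_vector_mult_diff_distrib BA)
  also have "\<dots> \<le> (\<Sum>i<N. (- lam * (e i \<bullet> e i) - e i \<bullet> (B *v e i)) + 
        (e i \<bullet> (B *v e i) + e ((i + N - 1) mod N) \<bullet> (B *v e ((i + N - 1) mod N))) - e i \<bullet> (B *v e i))"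
    by (intro sum_mono diff_right_mono add_mono hg quad) simp
  also have "\<dots> = - lam * (\<Sum>i<N. e i \<bullet> e i) - (\<Sum>i<N. e i \<bullet> (B *v e i))
       + (\<Sum>i<N. e ((i + N - 1) mod N) \<bullet> (B *v e ((i + N - 1) mod N)))"
    by (simp add: sum.distrib sum_subtractf sum_distrib_left sum_negf algebra_simps)
  also have "(\<Sum>i<N. e ((i + N - 1) mod N) \<bullet> (B *v e ((i + N - 1) mod N))) = (\<Sum>i<N. e i \<bullet> (B *v e i))"
    by (rule sum_pred)
  finally show ?thesis by simp
qed

lemma decr:
  fixes W :: "real \<Rightarrow> real"
  assumes d: "\<And>t. t \<ge> 0 \<Longrightarrow> \<exists>y. (W has_real_derivative y) (at t within {0..}) \<and> y \<le> 0"
    and t: "t \<ge> 0"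
  shows "W t \<le> W 0"
proof (rule DERIV_nonpos_imp_decreasing_open[OF t])
  fix s assume s: "0 < s" "s < t"
  then have "at s within {0..} = at s" by (intro at_within_interior) simp
  then show "\<exists>y. (W has_real_derivative y) (at s) \<and> y \<le> 0" using d[of s] s by auto
next
  have "continuous (at s within {0..}) W" if "s \<ge> 0" for s
    using d[OF that] by (auto intro: DERIV_continuous)
  then show "continuous_on {0..t} W"
    unfolding continuous_on_eq_continuous_within
    by (meson atLeastAtMost_iff atLeast_iff atLeastatMost_subset_iff continuous_within_subset order_refl
        subsetI)
qed

lemma exp_decay:
  fixes V V' :: "real \<Rightarrow> real"
  assumes d: "\<And>t. t \<ge> 0 \<Longrightarrow> (V has_real_derivative V' t) (at t within {0..})"
    and b: "\<And>t. t \<ge> 0 \<Longrightarrow> V' t \<le> - 2 * lam * V t"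
    and t: "t \<ge> 0"
  shows "V t \<le> V 0 * exp (- 2 * lam * t)"
proof -
  define W where "W t = exp (2 * lam * t) * V t" for t
  have "W t \<le> W 0"
  proof (rule decr[OF _ t])
    fix s :: real assume s: "s \<ge> 0"
    have "(W has_real_derivative exp (2 * lam * s) * (2 * lam) * V s + exp (2 * lam * s) * V' s)
        (at s within {0..})"
      unfolding W_def by (auto intro!: derivative_eq_intros d[OF s])
    moreover have "exp (2 * lam * s) * (2 * lam) * V s + exp (2 * lam * s) * V' s
        = exp (2 * lam * s) * (2 * lam * V s + V' s)" by (simp add: algebra_simps)
    moreover have "exp (2 * lam * s) * (2 * lam * V s + V' s) \<le> 0"
      using b[OF s] by (intro mult_nonneg_nonpos) auto
    ultimately show "\<exists>y. (W has_real_derivative y) (at s within {0..}) \<and> y \<le> 0" by auto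
  qed
  then have "exp (2 * lam * t) * V t \<le> V 0" unfolding W_def by simp
  then have "exp (- 2 * lam * t) * (exp (2 * lam * t) * V t) \<le> exp (- 2 * lam * t) * V 0"
    by (intro mult_left_mono) auto
  then show ?thesis by (simp add: exp_minus field_simps)
qed

theorem theorem3p6:
  fixes f :: "real^'n \<Rightarrow> real^'n" and A :: "real^'n^'n" and N :: nat
    and lam :: real
  assumes smooth: "smooth_map f"
    and N2: "N \<ge> 2"
    and lam: "lam > 0"
    and contr: "\<forall>z. loewner_le (sym_part (jacobian f z) + sym_part A) (- lam *\<^sub>R mat 1)"
    and As_pd: "pd (sym_part A)"
    and cond: "psd (4 *\<^sub>R sym_part A - A ** matrix_inv (sym_part A) ** transpose A)"
  shows "\<forall>x :: real \<Rightarrow> nat \<Rightarrow> real^'n.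
           (\<forall>i<N. \<forall>t\<ge>0. ((\<lambda>s. x s i) has_vector_derivative
                 (f (x t i) + A *v (x t ((i + N - 1) mod N) - x t i))) (at t within {0..}))
           \<longrightarrow> (\<exists>M c. c > 0 \<and> (\<forall>i<N. \<forall>j<N. \<forall>t\<ge>0.
                   norm (x t i - x t j) \<le> M * exp (- c * t)))"
proof (intro allI impI)
  fix x :: "real \<Rightarrow> nat \<Rightarrow> real^'n"
  assume hx: "\<forall>i<N. \<forall>t\<ge>0. ((\<lambda>s. x s i) has_vector_derivative
                 (f (x t i) + A *v (x t ((i + N - 1) mod N) - x t i))) (at t within {0..})"
  define s where "s i = (i + 1) mod N" for i
  define p where "p i = (i + N - 1) mod N" for i
  define e where "e t i = x t i - x t (s i)" for t i
  define g where "g t i = f (x t i) - f (x t (s i))" for t i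
  define e' where "e' t i = g t i + A *v (e t (p i) - e t i)" for t i
  have sN: "i < N \<Longrightarrow> s i < N" for i unfolding s_def using N2 by simp
  have eder: "((\<lambda>r. e r i) has_vector_derivative e' t i) (at t within {0..})"
    if i: "i < N" and t: "t \<ge> 0" for i t
  proof -
    have h1: "((\<lambda>r. x r i) has_vector_derivative (f (x t i) + A *v (x t (p i) - x t i))) (at t within {0..})"
      using hx i t unfolding p_def by blast
    have h2: "((\<lambda>r. x r (s i)) has_vector_derivative (f (x t (s i)) + A *v (x t (p (s i)) - x t (s i)))) (at t within {0..})"
      using hx sN[OF i] t unfolding p_def by blast
    have ps: "p (s i) = i" unfolding p_def s_def using ps2[OF i] .
    have sp: "s (p i) = i" unfolding p_def s_def using ps1[OF i] .
    have "(f (x t i) + A *v (x t (p i) - x t i)) - (f (x t (s i)) + A *v (x t (p (s i)) - x t (s i)))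
        = e' t i"
      unfolding e'_def g_def e_def ps sp
      apply (simp only: matrix_vector_mult_diff_distrib)
      by (simp add: algebra_simps del: matrix_vector_mult_diff_distrib matrix_vector_right_distrib)
    then show ?thesis using has_vector_derivative_diff[OF h1 h2] unfolding e_def by simp
  qed
  define V where "V t = (\<Sum>i<N. e t i \<bullet> e t i)" for t
  define V' where "V' t = (\<Sum>i<N. 2 * (e t i \<bullet> e' t i))" for t
  have Vder: "(V has_real_derivative V' t) (at t within {0..})" if t: "t \<ge> 0" for t
    unfolding V_def V'_def
  proof (rule DERIV_sum)
    fix i assume "i \<in> {..<N}"
    then have "((\<lambda>r. e r i) has_derivative (\<lambda>h. h *\<^sub>R e' t i)) (at t within {0..})"
      using eder t unfolding has_vector_derivative_def by simp
    from has_derivative_inner[OF this this]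
    show "((\<lambda>r. e r i \<bullet> e r i) has_real_derivative 2 * (e t i \<bullet> e' t i)) (at t within {0..})"
      unfolding has_field_derivative_def
      by (rule has_derivative_eq_rhs) (auto simp: fun_eq_iff inner_commute algebra_simps)
  qed
  have Vb: "V' t \<le> - 2 * lam * V t" if t: "t \<ge> 0" for t
  proof -
    have "(\<Sum>i<N. e t i \<bullet> (g t i + A *v (e t ((i + N - 1) mod N) - e t i)))
          \<le> - lam * (\<Sum>i<N. e t i \<bullet> e t i)"
    proof (rule ring_sum[where B = "sym_part A"])
      fix i
      show "e t i \<bullet> g t i \<le> - lam * (e t i \<bullet> e t i) - e t i \<bullet> (sym_part A *v e t i)"
        unfolding e_def g_def by (rule f_bound[OF smooth contr])
    next
      fix v w :: "real^'n"
      show "v \<bullet> (A *v w) \<le> v \<bullet> (sym_part A *v v) + w \<bullet> (sym_part A *v w)"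
        by (rule quad_bound[OF As_pd cond])
    next
      fix v :: "real^'n"
      show "v \<bullet> (sym_part A *v v) = v \<bullet> (A *v v)" by (rule sym_part_quad)
    qed
    then show ?thesis unfolding V'_def V_def e'_def p_def
      by (simp add: sum_distrib_left[symmetric])
  qed
  define K where "K = sqrt (V 0)"
  have ebound: "norm (e t i) \<le> K * exp (- lam * t)" if i: "i < N" and t: "t \<ge> 0" for i t
  proof -
    have "e t i \<bullet> e t i \<le> V t"
      unfolding V_def using i by (intro member_le_sum) auto
    also have "V t \<le> V 0 * exp (- 2 * lam * t)" by (rule exp_decay[OF Vder Vb t])
    finally have "sqrt (e t i \<bullet> e t i) \<le> sqrt (V 0 * exp (- 2 * lam * t))"
      by (rule real_sqrt_le_mono)
    also have "exp (- 2 * lam * t) = (exp (- lam * t))^2"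
      by (simp add: exp_double[symmetric] power2_eq_square exp_add[symmetric])
    finally show ?thesis unfolding K_def
      by (simp add: norm_eq_sqrt_inner real_sqrt_mult)
  qed
  have chain: "norm (x t i - x t j) \<le> real (j - i) * (K * exp (- lam * t))"
    if ij: "i \<le> j" "j < N" and t: "t \<ge> 0" for i j t
    using ij
  proof (induction j rule: dec_induct)
    case base then show ?case by simp
  next
    case (step k)
    have sk: "s k = k + 1" unfolding s_def using step by simp
    have "norm (x t i - x t (k + 1)) \<le> norm (x t i - x t k) + norm (e t k)"
      unfolding e_def sk by (rule norm_diff_triangle_le[of _ "x t k"]) auto
    also have "\<dots> \<le> real (k - i) * (K * exp (- lam * t)) + K * exp (- lam * t)"
      using step ebound[of k t] t by (intro add_mono) auto
    also have "\<dots> = real (Suc k - i) * (K * exp (- lam * t))"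
      using step by (simp add: of_nat_diff algebra_simps)
    finally show ?case by simp
  qed
  have Kpos: "K \<ge> 0" unfolding K_def V_def by (auto intro!: sum_nonneg)
  show "\<exists>M c. c > 0 \<and> (\<forall>i<N. \<forall>j<N. \<forall>t\<ge>0. norm (x t i - x t j) \<le> M * exp (- c * t))"
  proof (intro exI conjI allI impI)
    show "lam > 0" by (rule lam)
    fix i j t assume i: "i < N" and j: "j < N" and t: "(t::real) \<ge> 0"
    have Kt: "0 \<le> K * exp (- lam * t)" using Kpos by simp
    have "norm (x t i - x t j) \<le> real N * (K * exp (- lam * t))"
    proof (cases "i \<le> j")
      case True
      then have "norm (x t i - x t j) \<le> real (j - i) * (K * exp (- lam * t))" using chain j t by blast
      also have "\<dots> \<le> real N * (K * exp (- lam * t))" using j Kt by (intro mult_right_mono) auto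
      finally show ?thesis .
    next
      case False
      then have "norm (x t j - x t i) \<le> real (i - j) * (K * exp (- lam * t))" using chain i t by simp
      also have "\<dots> \<le> real N * (K * exp (- lam * t))" using i Kt by (intro mult_right_mono) auto
      finally show ?thesis by (simp add: norm_minus_commute)
    qed
    then show "norm (x t i - x t j) \<le> (real N * K) * exp (- lam * t)" by simp
  qed
qed
end
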